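(* Let $C\subseteq\mathbb{F}_q^n$ be a constant weight linear code. Let $C'$ be a subcode of $C$ and $c\in C$ a codeword. Then $c\in C'$ if and only if $\mathrm{Supp}(c)\subseteq\mathrm{Supp}(C')$.
   Context: A subcode is a linear subspace. For a subcode $D$, $\mathrm{Supp}(D)=\{x\in\{1,\dots,n\}: \exists d\in D,\ d_x\neq0\}$, and $\mathrm{Supp}(c)$ is the support of the subcode spanned by $c$. A constant weight code is a linear code all of whose non-zero codewords have the same number of non-zero coordinates. *)

theory Defs
  imports "HOL-Analysis.Analysis"
begin

text \<open>Vectors of F_q^n are modelled as 'a ^ 'n with 'a a finite field and
  'n a finite index type (n = CARD('n)).\<close>

definition is_subcode :: "('a::field ^ 'n) set \<Rightarrow> bool" where
  "is_subcode D \<longleftrightarrow> 0 \<in> D \<and> (\<forall>x\<in>D. \<forall>y\<in>D. x + y \<in> D) \<and> (\<forall>t. \<forall>x\<in>D. t *s x \<in> D)"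

definition code_supp :: "('a::zero ^ 'n) set \<Rightarrow> 'n set" where
  "code_supp D = {i. \<exists>d\<in>D. d $ i \<noteq> 0}"

definition span_one :: "'a::field ^ 'n \<Rightarrow> ('a ^ 'n) set" where
  "span_one c = {t *s c | t. True}"

definition vec_supp :: "'a::field ^ 'n \<Rightarrow> 'n set" where
  "vec_supp c = code_supp (span_one c)"

definition hweight :: "'a::zero ^ 'n \<Rightarrow> nat" where
  "hweight c = card {i. c $ i \<noteq> 0}"

definition constant_weight :: "('a::zero ^ 'n) set \<Rightarrow> bool" where
  "constant_weight C \<longleftrightarrow> (\<exists>w. \<forall>c\<in>C. c \<noteq> 0 \<longrightarrow> hweight c = w)"

end

theory Submission
  imports Defs
begin

lemma hweight_sum: "hweight (x::'a::zero^'n) = (\<Sum>i\<in>UNIV. if x $ i \<noteq> 0 then 1 else 0)"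
  unfolding hweight_def
  by (simp add: sum.If_cases)

lemma shift_sum:
  fixes C' :: "('a::{field,finite} ^ 'n) set" and c :: "'a ^ 'n"
  assumes sub: "is_subcode C'" and supp: "\<And>i. c $ i \<noteq> 0 \<Longrightarrow> i \<in> code_supp C'"
  shows "(\<Sum>x\<in>C'. hweight (x + c)) = (\<Sum>x\<in>C'. hweight x)"
proof -
  have per: "(\<Sum>x\<in>C'. (if (x + c) $ i \<noteq> 0 then 1 else 0::nat)) = (\<Sum>x\<in>C'. (if x $ i \<noteq> 0 then 1 else 0))" for i
  proof (cases "i \<in> code_supp C'")
    case False
    then have "\<forall>x\<in>C'. x $ i = 0" unfolding code_supp_def by auto
    moreover have "c $ i = 0" using supp False by blast
    ultimately show ?thesis by simp
  next
    case True
    then obtain d where d: "d \<in> C'" "d $ i \<noteq> 0" unfolding code_supp_def by auto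
    define e where "e = (c $ i / d $ i) *s d"
    have eC: "e \<in> C'" using sub d unfolding is_subcode_def e_def by auto
    have ei: "e $ i = c $ i" using d(2) by (simp add: e_def)
    have negC: "- e \<in> C'"
    proof -
      have "(-1) *s e \<in> C'" using sub eC unfolding is_subcode_def by blast
      moreover have "(-1) *s e = - e" by (simp add: vec_eq_iff)
      ultimately show ?thesis by simp
    qed
    have addc: "x + y \<in> C'" if "x \<in> C'" "y \<in> C'" for x y
      using sub that unfolding is_subcode_def by blast
    have bij: "bij_betw (\<lambda>x. x + e) C' C'"
    proof (rule bij_betwI[where g="\<lambda>x. x + - e"])
      show "(\<lambda>x. x + e) \<in> C' \<rightarrow> C'" using addc eC by blast
      show "(\<lambda>x. x + - e) \<in> C' \<rightarrow> C'" using addc negC by blast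
      show "x + e + - e = x" for x by (simp add: add.assoc)
      show "y + - e + e = y" for y by (simp add: add.assoc)
    qed
    have "(\<Sum>x\<in>C'. (if (x + e) $ i \<noteq> 0 then 1 else 0::nat)) =
          (\<Sum>x\<in>C'. (if x $ i \<noteq> 0 then 1 else 0))"
      by (rule sum.reindex_bij_betw[OF bij, of "\<lambda>x. if x $ i \<noteq> 0 then 1 else 0::nat"])
    moreover have "(x + e) $ i = (x + c) $ i" for x using ei by simp
    ultimately show ?thesis by simp
  qed
  have "(\<Sum>x\<in>C'. hweight (x + c)) = (\<Sum>x\<in>C'. \<Sum>i\<in>UNIV. (if (x + c) $ i \<noteq> 0 then 1 else 0::nat))"
    by (simp add: hweight_sum)
  also have "\<dots> = (\<Sum>i\<in>UNIV. \<Sum>x\<in>C'. (if (x + c) $ i \<noteq> 0 then 1 else 0::nat))"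
    by (rule sum.swap)
  also have "\<dots> = (\<Sum>i\<in>UNIV. \<Sum>x\<in>C'. (if x $ i \<noteq> 0 then 1 else 0::nat))"
    using per by simp
  also have "\<dots> = (\<Sum>x\<in>C'. \<Sum>i\<in>UNIV. (if x $ i \<noteq> 0 then 1 else 0::nat))"
    by (rule sum.swap)
  also have "\<dots> = (\<Sum>x\<in>C'. hweight x)" by (simp add: hweight_sum)
  finally show ?thesis .
qed

theorem lemma2:
  fixes C C' :: "('a::{field,finite} ^ 'n) set" and c :: "'a ^ 'n"
  assumes "is_subcode C" and "constant_weight C"
    and "is_subcode C'" and "C' \<subseteq> C"
    and "c \<in> C"
  shows "c \<in> C' \<longleftrightarrow> vec_supp c \<subseteq> code_supp C'"
proof
  assume "c \<in> C'"
  then show "vec_supp c \<subseteq> code_supp C'"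
    using assms(3) unfolding vec_supp_def code_supp_def span_one_def is_subcode_def by blast
next
  assume vs: "vec_supp c \<subseteq> code_supp C'"
  have supp: "i \<in> code_supp C'" if "c $ i \<noteq> 0" for i
  proof -
    have "(1::'a) *s c \<in> span_one c" unfolding span_one_def by blast
    then have "i \<in> vec_supp c" using that unfolding vec_supp_def code_supp_def by force
    then show ?thesis using vs by blast
  qed
  show "c \<in> C'"
  proof (rule ccontr)
    assume nc: "c \<notin> C'"
    obtain w where w: "\<And>x. x \<in> C \<Longrightarrow> x \<noteq> 0 \<Longrightarrow> hweight x = w"
      using assms(2) unfolding constant_weight_def by blast
    have z: "0 \<in> C'" using assms(3) unfolding is_subcode_def by blast
    have fin: "finite C'" by simp
    have addC: "x + c \<in> C" if "x \<in> C'" for x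
      using assms(1,4,5) that unfolding is_subcode_def by blast
    have nz: "x + c \<noteq> 0" if "x \<in> C'" for x
    proof
      assume "x + c = 0"
      then have "- x = c" by (metis neg_eq_iff_add_eq_0)
      moreover have "(-1) *s x = - x" by (simp add: vec_eq_iff)
      ultimately have "c = (-1) *s x" by simp
      then show False using nc assms(3) that unfolding is_subcode_def by blast
    qed
    have "(\<Sum>x\<in>C'. hweight (x + c)) = (\<Sum>x\<in>C'. w)"
    proof (rule sum.cong)
      fix x assume "x \<in> C'"
      show "hweight (x + c) = w" using w[OF addC[OF \<open>x \<in> C'\<close>] nz[OF \<open>x \<in> C'\<close>]] .
    qed simp
    also have "\<dots> = card C' * w" by simp
    finally have L: "(\<Sum>x\<in>C'. hweight (x + c)) = card C' * w" .
    have "(\<Sum>x\<in>C'. hweight x) = hweight (0::'a^'n) + (\<Sum>x\<in>C' - {0}. hweight x)"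
      using sum.remove[OF fin z] by simp
    also have "\<dots> = (\<Sum>x\<in>C' - {0}. w)"
    proof -
      have "hweight (0::'a^'n) = 0" by (simp add: hweight_def)
      moreover have "(\<Sum>x\<in>C' - {0}. hweight x) = (\<Sum>x\<in>C' - {0}. w)"
      proof (rule sum.cong)
        fix x assume x: "x \<in> C' - {0}"
        then have "x \<in> C" "x \<noteq> 0" using assms(4) by auto
        then show "hweight x = w" by (rule w)
      qed simp
      ultimately show ?thesis by simp
    qed
    also have "\<dots> = (card C' - 1) * w" using z by simp
    finally have R: "(\<Sum>x\<in>C'. hweight x) = (card C' - 1) * w" .
    have "C' \<noteq> {}" using z by blast
    then have "card C' \<ge> 1" using fin by (simp add: Suc_le_eq card_gt_0_iff)
    have "card C' * w = (card C' - 1) * w"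
    proof -
      have "(\<Sum>x\<in>C'. hweight (x + c)) = (\<Sum>x\<in>C'. hweight x)"
        by (rule shift_sum[OF assms(3)]) (rule supp)
      then show ?thesis using L R by (simp only:)
    qed
    moreover have "card C' * w = (card C' - 1) * w + w" using \<open>card C' \<ge> 1\<close>
      by (metis add.commute le_add_diff_inverse mult_Suc plus_1_eq_Suc)
    ultimately have w0: "w = 0" by simp
    have cn: "c \<noteq> 0" using nc z by auto
    then obtain i where "c $ i \<noteq> 0" by (auto simp: vec_eq_iff)
    then have "hweight c \<noteq> 0" unfolding hweight_def by auto
    moreover have "hweight c = w" using w[OF assms(5) cn] .
    ultimately show False using w0 by simp
  qed
qed

end
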